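(* Let $L$ be an invertible linear map of $\mathbb{C}^n$ with eigenvalues $\lambda_1,\dots,\lambda_n$ satisfying $0<|\lambda_1|<\dots<|\lambda_n|<1$. For every $r\ge 1$, \[ SR_r(L)+\mathrm{Im}(M_L^r)=\mathcal{H}^r, \] where $M_L^r:\mathcal{H}^r\to\mathcal{H}^r$ is $h\mapsto h\circ L-L\circ h$.
   Context: $E^{\lambda}(L)$ is the characteristic subspace of $L$ for the eigenvalue $\lambda$; here $\mathbb{C}^n=E^{\lambda_1}(L)\oplus\cdots\oplus E^{\lambda_n}(L)$. $\mathcal{H}^r$ is the vector space of homogeneous polynomial maps of degree $r$ from $\mathbb{C}^n$ to $\mathbb{C}^n$. A homogeneous polynomial map $Q$ with $Q(0)=0$ is of type $s=(s_1,\dots,s_n)$ if for all $a_1,\dots,a_n\in\mathbb{C}$ and $(t_1,\dots,t_n)\in E^{\lambda_1}(L)\times\cdots\times E^{\lambda_n}(L)$, $Q(a_1t_1+\dots+a_nt_n)=a_1^{s_1}\cdots a_n^{s_n}Q(t_1+\dots+t_n)$. A polynomial map $P$ with $P(0)=0$ is of sub-resonance type with respect to $L$ if for each $i$ its component $P_i:\mathbb{C}^n\to E^{\lambda_i}(L)$ consists only of homogeneous terms of types $s$ with $\ln|\lambda_i|\le\sum_j s_j\ln|\lambda_j|$. $SR_r(L)$ denotes the set of elements of $\mathcal{H}^r$ that are of sub-resonance type with respect to $L$. *)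

theory Defs
  imports "HOL-Analysis.Analysis"
begin

text \<open>C^n is modelled as complex^'n for a finite index type 'n (n = CARD('n));
  linear maps of C^n are matrices acting by *v.\<close>

definition is_eigenvalue :: "complex^'n^'n \<Rightarrow> complex \<Rightarrow> bool" where
  "is_eigenvalue L \<mu> \<longleftrightarrow> (\<exists>v. v \<noteq> 0 \<and> L *v v = \<mu> *s v)"

definition char_subspace :: "complex^'n^'n \<Rightarrow> complex \<Rightarrow> (complex^'n) set" where
  "char_subspace L \<mu> = {v. ((\<lambda>x. L *v x - \<mu> *s x) ^^ CARD('n)) v = 0}"

definition hom_poly :: "nat \<Rightarrow> (complex^'n \<Rightarrow> complex^'n) \<Rightarrow> bool" where
  "hom_poly r Q \<longleftrightarrow> (\<exists>c :: ('n \<Rightarrow> nat) \<Rightarrow> complex^'n.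
     \<forall>x. Q x = (\<Sum>\<alpha>\<in>{\<alpha>. sum \<alpha> UNIV = r}. (\<Prod>i\<in>UNIV. (x $ i) ^ \<alpha> i) *s c \<alpha>))"

definition Hr :: "nat \<Rightarrow> (complex^'n \<Rightarrow> complex^'n) set" where
  "Hr r = {Q. hom_poly r Q}"

definition of_type :: "complex^'n^'n \<Rightarrow> ('n \<Rightarrow> complex) \<Rightarrow> ('n \<Rightarrow> nat)
     \<Rightarrow> (complex^'n \<Rightarrow> complex^'n) \<Rightarrow> bool" where
  "of_type L lam s Q \<longleftrightarrow> Q 0 = 0 \<and>
     (\<forall>(a :: 'n \<Rightarrow> complex) (t :: 'n \<Rightarrow> complex^'n).
        (\<forall>j. t j \<in> char_subspace L (lam j)) \<longrightarrow>
        Q (\<Sum>j\<in>UNIV. a j *s t j) = (\<Prod>j\<in>UNIV. a j ^ s j) *s Q (\<Sum>j\<in>UNIV. t j))"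

definition subres_ok :: "('n \<Rightarrow> complex) \<Rightarrow> 'n \<Rightarrow> ('n \<Rightarrow> nat) \<Rightarrow> bool" where
  "subres_ok lam i s \<longleftrightarrow> ln (cmod (lam i)) \<le> (\<Sum>j\<in>UNIV. real (s j) * ln (cmod (lam j)))"

text \<open>SR_r(L): elements P of H^r such that, for each i, the component
  P_i : C^n \<rightarrow> E^{lam i}(L) (with P = sum_i P_i) is a sum of homogeneous
  polynomial terms Q i s of types s satisfying the sub-resonance condition.\<close>
definition SR :: "complex^'n^'n \<Rightarrow> ('n \<Rightarrow> complex) \<Rightarrow> nat \<Rightarrow> (complex^'n \<Rightarrow> complex^'n) set" where
  "SR L lam r = {P. P \<in> Hr r \<and>
     (\<exists>Q :: 'n \<Rightarrow> ('n \<Rightarrow> nat) \<Rightarrow> (complex^'n \<Rightarrow> complex^'n).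
        (\<forall>i s. Q i s \<in> Hr r \<and> of_type L lam s (Q i s) \<and>
               (\<forall>x. Q i s x \<in> char_subspace L (lam i))) \<and>
        (\<forall>x. P x = (\<Sum>i\<in>UNIV. \<Sum>s\<in>{s. sum s UNIV = r \<and> subres_ok lam i s}. Q i s x)))}"

definition MapM :: "complex^'n^'n \<Rightarrow> (complex^'n \<Rightarrow> complex^'n) \<Rightarrow> (complex^'n \<Rightarrow> complex^'n)" where
  "MapM L h = (\<lambda>x. h (L *v x) - L *v (h x))"

end

theory Submission imports Defs begin

definition monom :: "('n::finite \<Rightarrow> nat) \<Rightarrow> complex^'n \<Rightarrow> complex" where
  "monom \<alpha> x = (\<Prod>i\<in>UNIV. (x $ i) ^ \<alpha> i)"

definition hp :: "nat \<Rightarrow> (complex^'n::finite \<Rightarrow> complex) \<Rightarrow> bool" where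
  "hp r f \<longleftrightarrow> (\<exists>c. \<forall>x. f x = (\<Sum>\<alpha>\<in>{\<alpha>. sum \<alpha> UNIV = r}. c \<alpha> * monom \<alpha> x))"

lemma finite_Ar: "finite {\<alpha>::'n::finite \<Rightarrow> nat. sum \<alpha> UNIV = r}"
proof -
  have "{\<alpha>::'n \<Rightarrow> nat. sum \<alpha> UNIV = r} \<subseteq> {f. \<forall>x. (x \<in> UNIV \<longrightarrow> f x \<in> {..r}) \<and> (x \<notin> UNIV \<longrightarrow> f x = 0)}"
  proof (intro subsetI CollectI allI conjI impI)
    fix \<alpha> :: "'n \<Rightarrow> nat" and x assume "\<alpha> \<in> {\<alpha>. sum \<alpha> UNIV = r}"
    moreover have "\<alpha> x \<le> sum \<alpha> UNIV" by (rule member_le_sum) auto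
    ultimately show "\<alpha> x \<in> {..r}" by auto
  qed auto
  then show ?thesis using finite_subset finite_set_of_finite_funs[of "UNIV::'n set" "{..r}" 0] by auto
qed

lemma hp_zero: "hp r (\<lambda>_. 0)"
  unfolding hp_def by (rule exI[of _ "\<lambda>_. 0"]) simp

lemma hp_add: "hp r f \<Longrightarrow> hp r g \<Longrightarrow> hp r (\<lambda>x. f x + g x)"
  unfolding hp_def
proof (elim exE)
  fix c d assume c: "\<forall>x. f x = (\<Sum>\<alpha>\<in>{\<alpha>. sum \<alpha> UNIV = r}. c \<alpha> * monom \<alpha> x)"
    and d: "\<forall>x. g x = (\<Sum>\<alpha>\<in>{\<alpha>. sum \<alpha> UNIV = r}. d \<alpha> * monom \<alpha> x)"
  show "\<exists>e. \<forall>x. f x + g x = (\<Sum>\<alpha>\<in>{\<alpha>. sum \<alpha> UNIV = r}. e \<alpha> * monom \<alpha> x)"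
    by (rule exI[of _ "\<lambda>\<alpha>. c \<alpha> + d \<alpha>"]) (simp add: c d distrib_right sum.distrib)
qed

lemma hp_scale: "hp r f \<Longrightarrow> hp r (\<lambda>x. a * f x)"
  unfolding hp_def
proof (elim exE)
  fix c assume c: "\<forall>x. f x = (\<Sum>\<alpha>\<in>{\<alpha>. sum \<alpha> UNIV = r}. c \<alpha> * monom \<alpha> x)"
  show "\<exists>e. \<forall>x. a * f x = (\<Sum>\<alpha>\<in>{\<alpha>. sum \<alpha> UNIV = r}. e \<alpha> * monom \<alpha> x)"
    by (rule exI[of _ "\<lambda>\<alpha>. a * c \<alpha>"]) (simp add: c sum_distrib_left mult.assoc)
qed

lemma hp_sum: "finite S \<Longrightarrow> (\<And>j. j \<in> S \<Longrightarrow> hp r (g j)) \<Longrightarrow> hp r (\<lambda>x. \<Sum>j\<in>S. g j x)"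
  by (induction S rule: finite_induct) (auto intro: hp_zero hp_add)

lemma hp_const: "hp 0 (\<lambda>_. a)"
proof -
  have "{\<alpha>::'a \<Rightarrow> nat. sum \<alpha> UNIV = 0} = {\<lambda>_. 0}" by auto
  then show ?thesis unfolding hp_def monom_def
    by (intro exI[of _ "\<lambda>_. a"]) simp
qed

lemma hp_mono: "hp (sum s UNIV) (monom s)"
  unfolding hp_def
  by (rule exI[of _ "\<lambda>\<alpha>. if \<alpha> = s then 1 else 0"]) (simp add: finite_Ar sum.delta if_distrib[where f="\<lambda>c. c * _"] cong: if_cong)

lemma hp_mult_coord:
  fixes f :: "complex^'n::finite \<Rightarrow> complex"
  assumes "hp r f" shows "hp (Suc r) (\<lambda>x. x $ k * f x)"
proof -
  obtain c where c: "\<And>x. f x = (\<Sum>\<alpha>\<in>{\<alpha>. sum \<alpha> UNIV = r}. c \<alpha> * monom \<alpha> x)"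
    using assms unfolding hp_def by blast
  define \<delta> :: "'n \<Rightarrow> nat" where "\<delta> = (\<lambda>i. if i = k then 1 else 0)"
  define sh where "sh = (\<lambda>\<alpha>::'n\<Rightarrow>nat. \<lambda>i. \<alpha> i + \<delta> i)"
  define A where "A = {\<alpha>::'n\<Rightarrow>nat. sum \<alpha> UNIV = r}"
  define B where "B = {\<alpha>::'n\<Rightarrow>nat. sum \<alpha> UNIV = Suc r}"
  have inj: "inj sh" unfolding sh_def inj_def by (auto simp: fun_eq_iff)
  have shm: "monom (sh \<alpha>) x = x $ k * monom \<alpha> x" for \<alpha> x
  proof -
    have "monom (sh \<alpha>) x = monom \<alpha> x * (\<Prod>i\<in>UNIV. (x $ i) ^ \<delta> i)"
      unfolding monom_def sh_def by (simp add: power_add prod.distrib)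
    also have "(\<Prod>i\<in>UNIV. (x $ i) ^ \<delta> i) = x $ k"
      unfolding \<delta>_def by (simp add: if_distrib prod.delta cong: if_cong)
    finally show ?thesis by simp
  qed
  have sub: "sh ` A \<subseteq> B"
    unfolding A_def B_def sh_def \<delta>_def by (auto simp: sum.distrib sum.delta)
  define d where "d = (\<lambda>\<beta>. if \<beta> \<in> sh ` A then c (inv sh \<beta>) else 0)"
  have "x $ k * f x = (\<Sum>\<beta>\<in>B. d \<beta> * monom \<beta> x)" for x
  proof -
    have "x $ k * f x = (\<Sum>\<alpha>\<in>A. c \<alpha> * monom (sh \<alpha>) x)"
      unfolding c A_def by (simp add: sum_distrib_left shm algebra_simps)
    also have "\<dots> = (\<Sum>\<alpha>\<in>A. d (sh \<alpha>) * monom (sh \<alpha>) x)"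
      unfolding d_def using inj by (simp add: inv_f_f)
    also have "\<dots> = (\<Sum>\<beta>\<in>sh ` A. d \<beta> * monom \<beta> x)"
      using inj by (simp add: sum.reindex inj_on_subset[OF inj])
    also have "\<dots> = (\<Sum>\<beta>\<in>B. d \<beta> * monom \<beta> x)"
      by (rule sum.mono_neutral_left) (use sub finite_Ar in \<open>auto simp: B_def d_def\<close>)
    finally show ?thesis .
  qed
  then show ?thesis unfolding hp_def B_def by blast
qed

lemma hp_mult_lin:
  assumes "hp r f" shows "hp (Suc r) (\<lambda>x. (\<Sum>j\<in>UNIV. b j * x $ j) * f x)"
proof -
  have "hp (Suc r) (\<lambda>x. \<Sum>j\<in>UNIV. b j * (x $ j * f x))"
    by (intro hp_sum hp_scale hp_mult_coord assms) simp
  then show ?thesis by (simp add: sum_distrib_right mult.assoc)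
qed

lemma hp_pow:
  assumes "hp m f" shows "hp (m + e) (\<lambda>x. (\<Sum>j\<in>UNIV. b j * x $ j) ^ e * f x)"
proof (induction e)
  case 0 then show ?case using assms by simp
next
  case (Suc e)
  have "hp (Suc (m + e)) (\<lambda>x. (\<Sum>j\<in>UNIV. b j * x $ j) * ((\<Sum>j\<in>UNIV. b j * x $ j) ^ e * f x))"
    by (rule hp_mult_lin[OF Suc])
  then show ?case by (simp add: mult.assoc)
qed

lemma hp_prod:
  fixes A :: "complex^'n::finite^'m::finite"
  assumes "finite S"
  shows "hp (\<Sum>i\<in>S. \<alpha> i) (\<lambda>x. \<Prod>i\<in>S. ((A *v x) $ i) ^ \<alpha> i)"
  using assms
proof (induction S rule: finite_induct)
  case empty then show ?case using hp_const[of 1] by simp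
next
  case (insert a S)
  have "hp ((\<Sum>i\<in>S. \<alpha> i) + \<alpha> a) (\<lambda>x. (\<Sum>j\<in>UNIV. A $ a $ j * x $ j) ^ \<alpha> a * (\<Prod>i\<in>S. ((A *v x) $ i) ^ \<alpha> i))"
    by (rule hp_pow[OF insert.IH])
  then show ?case using insert.hyps by (simp add: matrix_vector_mult_def add.commute)
qed

lemma hp_comp:
  fixes A :: "complex^'n::finite^'m::finite"
  assumes "hp r f" shows "hp r (\<lambda>x. f (A *v x))"
proof -
  obtain c where c: "\<And>x. f x = (\<Sum>\<alpha>\<in>{\<alpha>. sum \<alpha> UNIV = r}. c \<alpha> * monom \<alpha> x)"
    using assms unfolding hp_def by blast
  have "hp r (\<lambda>x. \<Sum>\<alpha>\<in>{\<alpha>. sum \<alpha> UNIV = r}. c \<alpha> * monom \<alpha> (A *v x))"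
  proof (rule hp_sum[OF finite_Ar])
    fix \<alpha> :: "'m \<Rightarrow> nat" assume "\<alpha> \<in> {\<alpha>. sum \<alpha> UNIV = r}"
    then have "hp r (\<lambda>x. \<Prod>i\<in>UNIV. ((A *v x) $ i) ^ \<alpha> i)" using hp_prod[of UNIV \<alpha> A] by simp
    then show "hp r (\<lambda>x. c \<alpha> * monom \<alpha> (A *v x))" unfolding monom_def by (rule hp_scale)
  qed
  then show ?thesis by (simp add: c)
qed

lemma Hr_iff: "Q \<in> Hr r \<longleftrightarrow> (\<forall>k. hp r (\<lambda>x. Q x $ k))"
proof
  assume "Q \<in> Hr r"
  then obtain c where c: "\<And>x. Q x = (\<Sum>\<alpha>\<in>{\<alpha>. sum \<alpha> UNIV = r}. (\<Prod>i\<in>UNIV. (x $ i) ^ \<alpha> i) *s c \<alpha>)"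
    unfolding Hr_def hom_poly_def by blast
  show "\<forall>k. hp r (\<lambda>x. Q x $ k)"
  proof
    fix k
    show "hp r (\<lambda>x. Q x $ k)" unfolding hp_def
      by (rule exI[of _ "\<lambda>\<alpha>. c \<alpha> $ k"]) (simp add: c sum_component monom_def mult.commute)
  qed
next
  assume "\<forall>k. hp r (\<lambda>x. Q x $ k)"
  then obtain C where C: "\<And>k x. Q x $ k = (\<Sum>\<alpha>\<in>{\<alpha>. sum \<alpha> UNIV = r}. C k \<alpha> * monom \<alpha> x)"
    unfolding hp_def by metis
  show "Q \<in> Hr r" unfolding Hr_def hom_poly_def
    by (rule CollectI, rule exI[of _ "\<lambda>\<alpha>. \<chi> k. C k \<alpha>"])
      (simp add: vec_eq_iff sum_component C monom_def mult.commute)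
qed


lemma mv_sum: "(A::complex^'n::finite^'m::finite) *v (\<Sum>j\<in>S. f j) = (\<Sum>j\<in>S. A *v f j)"
  by (induction S rule: infinite_finite_induct) (simp_all add: matrix_vector_right_distrib)

lemma Hr_zero: "(\<lambda>_. 0) \<in> Hr r"
  unfolding Hr_iff by (simp add: hp_zero)

lemma Hr_add: "P \<in> Hr r \<Longrightarrow> G \<in> Hr r \<Longrightarrow> (\<lambda>x. P x + G x) \<in> Hr r"
  unfolding Hr_iff by (simp add: hp_add)

lemma Hr_sum: "finite S \<Longrightarrow> (\<And>j. j \<in> S \<Longrightarrow> g j \<in> Hr r) \<Longrightarrow> (\<lambda>x. \<Sum>j\<in>S. g j x) \<in> Hr r"
  unfolding Hr_iff by (simp add: hp_sum)

lemma Hr_comp: "Q \<in> Hr r \<Longrightarrow> (\<lambda>x. Q (A *v x)) \<in> Hr r"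
  unfolding Hr_iff proof (intro allI)
  fix k assume "\<forall>k. hp r (\<lambda>x. Q x $ k)"
  then show "hp r (\<lambda>x. Q (A *v x) $ k)" using hp_comp[of r "\<lambda>x. Q x $ k" A] by blast
qed

lemma Hr_lin: 
  fixes A :: "complex^'n::finite^'n"
  shows "Q \<in> Hr r \<Longrightarrow> (\<lambda>x. A *v Q x) \<in> Hr r"
  unfolding Hr_iff matrix_vector_mult_def by (auto intro!: hp_sum hp_scale)

lemma Hr_diff: "P \<in> Hr r \<Longrightarrow> G \<in> Hr r \<Longrightarrow> (\<lambda>x. P x - G x) \<in> Hr r"
  unfolding Hr_iff using hp_add hp_scale[of r _ "-1"] by fastforce

lemma Hr_monoW:
  fixes W :: "complex^'n::finite^'n"
  assumes "sum s UNIV = r" shows "(\<lambda>x. monom s (W *v x) *s w) \<in> Hr r"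
  unfolding Hr_iff
proof
  fix k
  have "hp r (\<lambda>x. w $ k * monom s (W *v x))" using hp_scale[OF hp_comp[OF hp_mono[of s]]] assms by simp
  then show "hp r (\<lambda>x. (monom s (W *v x) *s w) $ k)" by (simp add: mult.commute)
qed

lemma MapM_Hr: "h \<in> Hr r \<Longrightarrow> MapM L h \<in> Hr r"
  unfolding MapM_def by (intro Hr_diff Hr_comp Hr_lin)

lemma eig_indep:
  fixes L :: "complex^'n::finite^'n"
  assumes v: "\<And>i. L *v v i = lam i *s v i" and vnz: "\<And>i. v i \<noteq> 0" and inj: "inj lam"
    and "finite S"
  shows "(\<Sum>j\<in>S. c j *s v j) = 0 \<Longrightarrow> j \<in> S \<Longrightarrow> c j = 0"
  using \<open>finite S\<close>
proof (induction S arbitrary: c j rule: finite_induct)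
  case empty then show ?case by simp
next
  case (insert a S)
  have z: "c a *s v a + (\<Sum>j\<in>S. c j *s v j) = 0" using insert by simp
  have "L *v (c a *s v a + (\<Sum>j\<in>S. c j *s v j)) - lam a *s (c a *s v a + (\<Sum>j\<in>S. c j *s v j)) = 0"
    by (simp add: z)
  then have S1: "(\<Sum>j\<in>S. (c j * (lam j - lam a)) *s v j) = 0"
    by (simp add: matrix_vector_right_distrib mv_sum vector_scalar_commute v vector_smult_assoc
        vector_add_ldistrib sum_cmul[symmetric] vector_sub_rdistrib sum_subtractf algebra_simps)
  then have S0: "\<And>j. j \<in> S \<Longrightarrow> c j * (lam j - lam a) = 0" using insert.IH[OF S1] by blast
  have "\<And>j. j \<in> S \<Longrightarrow> c j = 0"
  proof -
    fix j assume "j \<in> S"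
    then have "lam j \<noteq> lam a" using insert.hyps inj by (metis injD)
    then show "c j = 0" using S0[OF \<open>j \<in> S\<close>] by simp
  qed
  then have "c a *s v a = 0" using z by simp
  then have "c a = 0" using vnz[of a] by (metis vector_mul_eq_0)
  then show ?case using insert.prems \<open>\<And>j. j \<in> S \<Longrightarrow> c j = 0\<close> by auto
qed


lemma MapM_sum: "MapM L (\<lambda>x. \<Sum>j\<in>S. f j x) = (\<lambda>x. \<Sum>j\<in>S. MapM L (f j) x)"
  unfolding MapM_def by (simp add: mv_sum sum_subtractf)

context
  fixes L :: "complex^'n::finite^'n" and lam :: "'n \<Rightarrow> complex" and v :: "'n \<Rightarrow> complex^'n"
    and V W :: "complex^'n^'n"
  assumes v: "\<And>i. L *v v i = lam i *s v i" and injlam: "inj lam"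
    and V_def: "V = (\<chi> k j. v j $ k)" and WV: "W ** V = mat 1" and VW: "V ** W = mat 1"
begin

lemma Vc: "V *v c = (\<Sum>j\<in>UNIV. c$j *s v j)"
  unfolding V_def by (simp add: vec_eq_iff matrix_vector_mult_def mult.commute)

lemma coords: "x = (\<Sum>j\<in>UNIV. (W *v x)$j *s v j)"
proof -
  have "x = V *v (W *v x)" by (simp add: matrix_vector_mul_assoc VW)
  then show ?thesis using Vc by simp
qed

lemma coords_uniq: "W *v (\<Sum>j\<in>UNIV. c j *s v j) = (\<chi> j. c j)"
proof -
  have "(\<Sum>j\<in>UNIV. c j *s v j) = V *v (\<chi> j. c j)" using Vc by simp
  then show ?thesis by (simp add: matrix_vector_mul_assoc WV)
qed

lemma WL: "(W *v (L *v x))$k = lam k * (W *v x)$k"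
proof -
  have "L *v x = L *v (\<Sum>j\<in>UNIV. (W *v x)$j *s v j)" using coords by metis
  also have "\<dots> = (\<Sum>j\<in>UNIV. (lam j * (W *v x)$j) *s v j)"
    by (simp add: mv_sum vector_scalar_commute v vector_smult_assoc mult.commute)
  finally show ?thesis using coords_uniq by simp
qed

lemma char_zero:
  assumes "t \<in> char_subspace L (lam j)" "k \<noteq> j"
  shows "(W *v t)$k = 0"
proof -
  define g where "g = (\<lambda>x. L *v x - lam j *s x)"
  have g: "(W *v g u)$k = (lam k - lam j) * (W *v u)$k" for u
    unfolding g_def by (simp add: matrix_vector_mult_diff_distrib vector_scalar_commute WL algebra_simps)
  have gm: "(W *v (g ^^ m) u)$k = (lam k - lam j)^m * (W *v u)$k" for m u
    by (induction m) (simp_all add: g)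
  have "(g ^^ CARD('n)) t = 0" using assms(1) unfolding char_subspace_def g_def by simp
  then have "(lam k - lam j)^CARD('n) * (W *v t)$k = 0"
    using gm[of "CARD('n)" t] by simp
  moreover have "lam k \<noteq> lam j" using injlam assms(2) by (metis injD)
  ultimately show ?thesis by simp
qed

lemma char_v: "c *s v i \<in> char_subspace L (lam i)"
proof -
  define g where "g = (\<lambda>x. L *v x - lam i *s x)"
  have g0: "g (c *s v i) = 0" unfolding g_def by (simp add: vector_scalar_commute v vector_smult_assoc mult.commute)
  have gz: "(g ^^ m) 0 = 0" for m by (induction m) (simp_all add: g_def)
  obtain m where m: "CARD('n) = Suc m" using zero_less_card_finite not0_implies_Suc by blast
  have "(g ^^ CARD('n)) (c *s v i) = 0" unfolding m funpow_Suc_right by (simp add: g0 gz)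
  then show ?thesis unfolding char_subspace_def g_def by simp
qed

lemma monoL: "monom s (W *v (L *v x)) = (\<Prod>j\<in>UNIV. lam j ^ s j) * monom s (W *v x)"
  unfolding monom_def by (simp add: WL power_mult_distrib prod.distrib)

lemma T_of_type:
  assumes "sum s UNIV \<noteq> 0"
  shows "of_type L lam s (\<lambda>x. monom s (W *v x) *s w)"
  unfolding of_type_def
proof (intro conjI allI impI)
  obtain k where "s k \<noteq> 0" using assms by (metis sum.neutral)
  then have "monom s 0 = 0" unfolding monom_def by (subst prod_zero_iff) auto
  then show "monom s (W *v 0) *s w = 0" by simp
next
  fix a :: "'n \<Rightarrow> complex" and t :: "'n \<Rightarrow> complex^'n"
  assume t: "\<forall>j. t j \<in> char_subspace L (lam j)"
  have key: "(W *v (\<Sum>j\<in>UNIV. b j *s t j))$k = b k * (W *v t k)$k" for b k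
  proof -
    have "(W *v (\<Sum>j\<in>UNIV. b j *s t j))$k = (\<Sum>j\<in>UNIV. b j * (W *v t j)$k)"
      by (simp add: mv_sum vector_scalar_commute)
    also have "\<dots> = (\<Sum>j\<in>UNIV. if j = k then b k * (W *v t k)$k else 0)"
    proof (rule sum.cong)
      fix j assume "j \<in> (UNIV::'n set)"
      show "b j * (W *v t j)$k = (if j = k then b k * (W *v t k)$k else 0)"
        using char_zero[of "t j" j k] t by (cases "j = k") auto
    qed simp
    finally show ?thesis by simp
  qed
  have k1: "(W *v (\<Sum>j\<in>UNIV. t j))$k = (W *v t k)$k" for k
    using key[of "\<lambda>_. 1" k] by simp
  have "monom s (W *v (\<Sum>j\<in>UNIV. a j *s t j)) = (\<Prod>j\<in>UNIV. a j ^ s j) * monom s (W *v (\<Sum>j\<in>UNIV. t j))"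
    unfolding monom_def by (simp add: key k1 power_mult_distrib prod.distrib)
  then show "monom s (W *v (\<Sum>j\<in>UNIV. a j *s t j)) *s w =
    (\<Prod>j\<in>UNIV. a j ^ s j) *s (monom s (W *v (\<Sum>j\<in>UNIV. t j)) *s w)"
    by (simp add: vector_smult_assoc)
qed

lemma MapM_T: "MapM L (\<lambda>x. monom s (W *v x) *s (e *s v i)) =
   (\<lambda>x. monom s (W *v x) *s ((((\<Prod>j\<in>UNIV. lam j ^ s j) - lam i) * e) *s v i))"
  unfolding MapM_def
  by (simp add: fun_eq_iff vec_eq_iff monoL vector_scalar_commute v algebra_simps)

end


lemma lp_ne:
  fixes lam :: "'n::finite \<Rightarrow> complex"
  assumes pos: "\<forall>i. 0 < cmod (lam i)" and ns: "\<not> subres_ok lam i s"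
  shows "(\<Prod>j\<in>UNIV. lam j ^ s j) \<noteq> lam i"
proof
  assume eq: "(\<Prod>j\<in>UNIV. lam j ^ s j) = lam i"
  have "ln (cmod (lam i)) = ln (\<Prod>j\<in>UNIV. cmod (lam j) ^ s j)"
    by (simp add: eq[symmetric] prod_norm[symmetric] norm_power)
  also have "\<dots> = (\<Sum>j\<in>UNIV. ln (cmod (lam j) ^ s j))"
    by (rule ln_prod) (use pos in auto)
  also have "\<dots> = (\<Sum>j\<in>UNIV. real (s j) * ln (cmod (lam j)))"
    by (simp add: ln_realpow)
  finally show False using ns unfolding subres_ok_def by simp
qed

theorem proposition3p8:
  fixes L :: "complex^'n^'n" and lam :: "'n \<Rightarrow> complex" and r :: nat
  assumes "invertible L"
    and "\<forall>i. is_eigenvalue L (lam i)"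
    and "\<forall>\<mu>. is_eigenvalue L \<mu> \<longrightarrow> (\<exists>i. \<mu> = lam i)"
    and "inj (\<lambda>i. cmod (lam i))"
    and "\<forall>i. 0 < cmod (lam i) \<and> cmod (lam i) < 1"
    and "r \<ge> 1"
  shows "{(\<lambda>x. P x + G x) | P G. P \<in> SR L lam r \<and> G \<in> MapM L ` Hr r} = Hr r"
proof
  show "{(\<lambda>x. P x + G x) | P G. P \<in> SR L lam r \<and> G \<in> MapM L ` Hr r} \<subseteq> Hr r"
    unfolding SR_def by (auto intro!: Hr_add MapM_Hr)
next
  obtain v where v0: "\<And>i. v i \<noteq> 0" and v: "\<And>i. L *v v i = lam i *s v i"
    using assms(2) unfolding is_eigenvalue_def by metis
  have injlam: "inj lam" using assms(4) unfolding inj_def by metis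
  define V :: "complex^'n^'n" where "V = (\<chi> k j. v j $ k)"
  have Vc: "V *v c = (\<Sum>j\<in>UNIV. c$j *s v j)" for c
    unfolding V_def by (simp add: vec_eq_iff matrix_vector_mult_def mult.commute)
  have "inj ((*v) V)"
  proof (rule injI)
    fix a b assume "V *v a = V *v b"
    then have "V *v (a - b) = 0" by (simp add: matrix_vector_mult_diff_distrib)
    then have "(\<Sum>j\<in>UNIV. (a - b)$j *s v j) = 0" by (simp add: Vc)
    then have "\<And>j. (a - b)$j = 0" using eig_indep[OF v v0 injlam, of UNIV "\<lambda>j. (a - b)$j"] by auto
    then show "a = b" by (simp add: vec_eq_iff)
  qed
  then obtain W where WV: "W ** V = mat 1" using matrix_left_invertible_injective by blast
  then have VW: "V ** W = mat 1" using matrix_left_right_inverse by blast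
  note ctx = v injlam V_def WV VW
  show "Hr r \<subseteq> {(\<lambda>x. P x + G x) | P G. P \<in> SR L lam r \<and> G \<in> MapM L ` Hr r}"
  proof
    fix G :: "complex^'n \<Rightarrow> complex^'n" assume G: "G \<in> Hr r"
    define A where "A = {\<alpha>::'n\<Rightarrow>nat. sum \<alpha> UNIV = r}"
    have finA: "finite A" unfolding A_def by (rule finite_Ar)
    have "(\<lambda>z. G (V *v z)) \<in> Hr r" using G by (rule Hr_comp)
    then obtain c where c: "\<And>z. G (V *v z) = (\<Sum>\<alpha>\<in>A. monom \<alpha> z *s c \<alpha>)"
      unfolding Hr_def hom_poly_def monom_def A_def by blast
    define D where "D = (\<lambda>\<alpha> i. (W *v c \<alpha>)$i)"
    define T where "T = (\<lambda>i s x. monom s (W *v x) *s (D s i *s v i))"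
    define Sset where "Sset = (\<lambda>i. {s. sum s UNIV = r \<and> subres_ok lam i s})"
    define Nset where "Nset = (\<lambda>i. {s. sum s UNIV = r \<and> \<not> subres_ok lam i s})"
    define Qf where "Qf = (\<lambda>i s. if s \<in> Sset i then T i s else (\<lambda>_. 0))"
    define lp where "lp = (\<lambda>s. \<Prod>j\<in>UNIV. lam j ^ s j)"
    define h where "h = (\<lambda>x. \<Sum>i\<in>UNIV. \<Sum>s\<in>Nset i. monom s (W *v x) *s ((D s i / (lp s - lam i)) *s v i))"
    define P where "P = (\<lambda>x. \<Sum>i\<in>UNIV. \<Sum>s\<in>Sset i. Qf i s x)"
    have finS: "finite (Sset i)" for i using finA unfolding Sset_def A_def by (auto intro: finite_subset)
    have finN: "finite (Nset i)" for i using finA unfolding Nset_def A_def by (auto intro: finite_subset)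
    have Gx: "G x = (\<Sum>i\<in>UNIV. \<Sum>s\<in>A. T i s x)" for x
    proof -
      have "G x = G (V *v (W *v x))" by (simp add: matrix_vector_mul_assoc VW)
      also have "\<dots> = (\<Sum>\<alpha>\<in>A. monom \<alpha> (W *v x) *s c \<alpha>)" by (rule c)
      also have "\<dots> = (\<Sum>\<alpha>\<in>A. monom \<alpha> (W *v x) *s (\<Sum>i\<in>UNIV. D \<alpha> i *s v i))"
        unfolding D_def using coords[OF ctx] by metis
      also have "\<dots> = (\<Sum>\<alpha>\<in>A. \<Sum>i\<in>UNIV. T i \<alpha> x)"
        unfolding T_def by (intro sum.cong refl) (simp add: sum_cmul[symmetric] vector_smult_assoc)
      also have "\<dots> = (\<Sum>i\<in>UNIV. \<Sum>\<alpha>\<in>A. T i \<alpha> x)" by (rule sum.swap)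
      finally show ?thesis .
    qed
    have split: "(\<Sum>s\<in>A. T i s x) = (\<Sum>s\<in>Sset i. T i s x) + (\<Sum>s\<in>Nset i. T i s x)" for i x
    proof -
      have "A = Sset i \<union> Nset i" "Sset i \<inter> Nset i = {}" unfolding A_def Sset_def Nset_def by auto
      then show ?thesis using finS finN by (simp add: sum.union_disjoint)
    qed
    have Mh: "MapM L h x = (\<Sum>i\<in>UNIV. \<Sum>s\<in>Nset i. T i s x)" for x
    proof -
      have "MapM L h x = (\<Sum>i\<in>UNIV. \<Sum>s\<in>Nset i. monom s (W *v x) *s
              (((lp s - lam i) * (D s i / (lp s - lam i))) *s v i))"
        unfolding h_def MapM_sum MapM_T[OF ctx] lp_def by simp
      also have "\<dots> = (\<Sum>i\<in>UNIV. \<Sum>s\<in>Nset i. T i s x)"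
      proof (intro sum.cong refl)
        fix i s assume "s \<in> Nset i"
        then have "lp s \<noteq> lam i" unfolding lp_def Nset_def using lp_ne assms(5) by blast
        then show "monom s (W *v x) *s (((lp s - lam i) * (D s i / (lp s - lam i))) *s v i) = T i s x"
          unfolding T_def by simp
      qed
      finally show ?thesis .
    qed
    have Px: "P x = (\<Sum>i\<in>UNIV. \<Sum>s\<in>Sset i. T i s x)" for x
      unfolding P_def Qf_def by simp
    have Geq: "G = (\<lambda>x. P x + MapM L h x)"
      by (rule ext) (simp add: Gx Px Mh split sum.distrib)
    have THr: "sum s UNIV = r \<Longrightarrow> T i s \<in> Hr r" for i s
      unfolding T_def by (rule Hr_monoW)
    have QfHr: "Qf i s \<in> Hr r" for i s
      unfolding Qf_def Sset_def using THr Hr_zero by auto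
    have hHr: "h \<in> Hr r"
      unfolding h_def by (intro Hr_sum finN Hr_monoW) (auto simp: Nset_def)
    have PHr: "P \<in> Hr r"
      unfolding P_def by (intro Hr_sum finS QfHr) auto
    have Qtype: "of_type L lam s (Qf i s)" for i s
    proof (cases "s \<in> Sset i")
      case True
      then have "sum s UNIV \<noteq> 0" using assms(6) unfolding Sset_def by auto
      then have "of_type L lam s (T i s)" unfolding T_def by (rule T_of_type[OF ctx])
      then show ?thesis using True unfolding Qf_def by simp
    next
      case False
      then show ?thesis unfolding Qf_def of_type_def by simp
    qed
    have Qchar: "Qf i s x \<in> char_subspace L (lam i)" for i s x
    proof -
      have "T i s x = (monom s (W *v x) * D s i) *s v i" unfolding T_def by (simp add: vector_smult_assoc)
      then have "T i s x \<in> char_subspace L (lam i)" using char_v[OF ctx] by simp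
      moreover have "(0::complex^'n) \<in> char_subspace L (lam i)" using char_v[OF ctx, of 0 i] by simp
      ultimately show ?thesis unfolding Qf_def by auto
    qed
    have "P \<in> SR L lam r"
      unfolding SR_def
      using PHr QfHr Qtype Qchar by (auto simp: P_def Sset_def intro!: exI[of _ Qf])
    moreover have "MapM L h \<in> MapM L ` Hr r" using hHr by blast
    ultimately show "G \<in> {(\<lambda>x. P x + G x) | P G. P \<in> SR L lam r \<and> G \<in> MapM L ` Hr r}"
      using Geq by blast
  qed
qed

end
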